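(* Let $\mathbf m\in\mathbb C^d$ with $\operatorname{supp}(\widehat{\mathbf m})\subseteq[\rho]_0$, where $\rho<d/2$, so that $\widehat{\mathbf m}=(a_0e^{i\theta_0},\dots,a_{\rho-1}e^{i\theta_{\rho-1}},0,\dots,0)^T$ with $a_j,\theta_j\in\mathbb R$. Let $2\le\kappa\le\rho$ and $$\mu_1=\min_{|p|\le\kappa-1,\ q\in[d]_0}\left|\left(F_d(\widehat{\mathbf m}\circ S_p\overline{\widehat{\mathbf m}})\right)_q\right|.$$ If $|a_0|>(\rho-1)|a_1|$ and $|a_1|\ge|a_2|\ge\cdots\ge|a_{\rho-1}|>0$, then $\mu_1>0$.
   Context: Vectors in $\mathbb C^d$ are indexed by $[d]_0=\{0,1,\dots,d-1\}$, with all indices interpreted modulo $d$. $F_d$ is the DFT matrix $(F_d)_{j,k}=e^{-2\pi i jk/d}$ and $\widehat{\mathbf m}=F_d\mathbf m$. The shift is $(S_p\mathbf x)_n=x_{n+p}$; $\circ$ is the entrywise product and $\overline{\mathbf x}$ the entrywise conjugate; $\operatorname{supp}(\mathbf x)=\{n:x_n\neq0\}$. *)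

theory Defs
  imports Complex_Main
begin

text \<open>Vectors in C^d are functions nat => complex; only the entries with index < d matter,
  and all indices are taken modulo d.\<close>

definition dft :: "nat \<Rightarrow> (nat \<Rightarrow> complex) \<Rightarrow> (nat \<Rightarrow> complex)" where
  "dft d x = (\<lambda>j. \<Sum>k<d. exp (- 2 * pi * \<i> * of_nat j * of_nat k / of_nat d) * x k)"

definition shift :: "nat \<Rightarrow> int \<Rightarrow> (nat \<Rightarrow> complex) \<Rightarrow> (nat \<Rightarrow> complex)" where
  "shift d p x = (\<lambda>n. x (nat ((int n + p) mod int d)))"

definition hadamard :: "(nat \<Rightarrow> complex) \<Rightarrow> (nat \<Rightarrow> complex) \<Rightarrow> (nat \<Rightarrow> complex)" where
  "hadamard x y = (\<lambda>n. x n * y n)"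

definition vconj :: "(nat \<Rightarrow> complex) \<Rightarrow> (nat \<Rightarrow> complex)" where
  "vconj x = (\<lambda>n. cnj (x n))"

definition mu1 :: "nat \<Rightarrow> nat \<Rightarrow> (nat \<Rightarrow> complex) \<Rightarrow> real" where
  "mu1 d \<kappa> mh = Min {norm (dft d (hadamard mh (shift d p (vconj mh))) q) | p q.
      \<bar>p\<bar> \<le> int \<kappa> - 1 \<and> q < d}"

end

theory Submission
  imports Defs
begin

lemma sum_nonzero_dom:
  fixes t :: "nat \<Rightarrow> complex"
  assumes "finite K" "kz \<in> K" "(\<Sum>k\<in>K-{kz}. norm (t k)) < norm (t kz)"
  shows "(\<Sum>k\<in>K. t k) \<noteq> 0"
proof
  assume h: "(\<Sum>k\<in>K. t k) = 0"
  have "(\<Sum>k\<in>K. t k) = t kz + (\<Sum>k\<in>K-{kz}. t k)"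
    using assms(1,2) by (simp add: sum.remove)
  hence "t kz = - (\<Sum>k\<in>K-{kz}. t k)" using h by (simp add: eq_neg_iff_add_eq_0)
  hence "norm (t kz) = norm (\<Sum>k\<in>K-{kz}. t k)" by simp
  also have "\<dots> \<le> (\<Sum>k\<in>K-{kz}. norm (t k))" by (rule norm_sum)
  finally show False using assms(3) by simp
qed

lemma sum_bound:
  fixes f :: "nat \<Rightarrow> real"
  assumes "finite K" "\<forall>k\<in>K. f k \<le> (if k \<in> A then c else 0)" "0 \<le> c" "finite A" "card A \<le> n"
  shows "sum f K \<le> real n * c"
proof -
  have "sum f K \<le> (\<Sum>k\<in>K. if k \<in> A then c else 0)"
    using assms(2) by (intro sum_mono) auto
  also have "\<dots> = real (card (K \<inter> A)) * c"
    using assms(1) by (simp add: sum.If_cases)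
  also have "\<dots> \<le> real (card A) * c"
    using assms(3,4) by (intro mult_right_mono) (auto intro: card_mono)
  also have "\<dots> \<le> real n * c" using assms(3,5) by (intro mult_right_mono) auto
  finally show ?thesis .
qed

theorem mainTheorem8:
  fixes d \<rho> \<kappa> :: nat and m :: "nat \<Rightarrow> complex" and a \<theta> :: "nat \<Rightarrow> real"
  assumes supp: "\<forall>j. \<rho> \<le> j \<and> j < d \<longrightarrow> dft d m j = 0"
    and rho_lt: "2 * \<rho> < d"
    and polar: "\<forall>j<\<rho>. dft d m j = complex_of_real (a j) * exp (\<i> * complex_of_real (\<theta> j))"
    and kappa: "2 \<le> \<kappa>" "\<kappa> \<le> \<rho>"
    and dom: "\<bar>a 0\<bar> > (real \<rho> - 1) * \<bar>a 1\<bar>"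
    and decr: "\<forall>j. 1 \<le> j \<and> j + 1 < \<rho> \<longrightarrow> \<bar>a j\<bar> \<ge> \<bar>a (j + 1)\<bar>"
    and last_pos: "\<bar>a (\<rho> - 1)\<bar> > 0"
  shows "mu1 d \<kappa> (dft d m) > 0"
proof -
  define mh where "mh = dft d m"
  define b where "b k = norm (mh k)" for k
  have nb: "b k = \<bar>a k\<bar>" if "k < \<rho>" for k
    using polar that by (simp add: b_def mh_def norm_mult)
  have zb: "b k = 0" if "\<rho> \<le> k" "k < d" for k
    using supp that by (simp add: b_def mh_def)
  have a10: "\<bar>a 1\<bar> \<le> \<bar>a 0\<bar>"
  proof -
    have "(1::real) \<le> real \<rho> - 1" using kappa by simp
    hence "\<bar>a 1\<bar> \<le> (real \<rho> - 1) * \<bar>a 1\<bar>" by (simp add: mult_le_cancel_right1)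
    thus ?thesis using dom by simp
  qed
  have anti: "\<bar>a j\<bar> \<le> \<bar>a i\<bar>" if "i \<le> j" "j < \<rho>" for i j
    using that
  proof (induction j rule: dec_induct)
    case base then show ?case by simp
  next
    case (step n)
    have "\<bar>a (Suc n)\<bar> \<le> \<bar>a n\<bar>"
    proof (cases "n = 0")
      case True then show ?thesis using a10 by simp
    next
      case False then show ?thesis using decr step.prems by auto
    qed
    then show ?case using step by simp
  qed
  have apos: "\<bar>a j\<bar> > 0" if "j < \<rho>" for j
  proof -
    have "\<bar>a (\<rho> - 1)\<bar> \<le> \<bar>a j\<bar>" using anti[of j "\<rho> - 1"] that by simp
    thus ?thesis using last_pos by linarith
  qed
  define sg where "sg p k = nat ((int k + p) mod int d)" for p :: int and k
  have dpos: "0 < d" using rho_lt by simp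
  have key: "norm (dft d (hadamard (dft d m) (shift d p (vconj (dft d m)))) q) > 0"
    if hp: "\<bar>p\<bar> \<le> int \<rho> - 1" for p :: int and q :: nat
  proof -
    define t where "t k = exp (- 2 * pi * \<i> * of_nat q * of_nat k / of_nat d) * (mh k * cnj (mh (sg p k)))" for k
    have eq: "dft d (hadamard (dft d m) (shift d p (vconj (dft d m)))) q = (\<Sum>k<d. t k)"
      by (simp add: dft_def hadamard_def shift_def vconj_def t_def mh_def sg_def)
    have nt: "norm (t k) = b k * b (sg p k)" for k
      by (simp add: t_def b_def norm_mult norm_exp_eq_Re)
    have ne: "(\<Sum>k<d. t k) \<noteq> 0"
    proof (cases "0 \<le> p")
      case True
      define P where "P = nat p"
      have P: "P < \<rho>" "p = int P" using True hp kappa by (auto simp: P_def)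
      have sgk: "sg p k = k + P" if "k < \<rho>" for k
        using that P rho_lt by (simp add: sg_def)
      show ?thesis
      proof (rule sum_nonzero_dom[where kz=0])
        have "(\<Sum>k\<in>{..<d}-{0}. norm (t k)) \<le> real (\<rho> - 1) * (\<bar>a 1\<bar> * \<bar>a P\<bar>)"
        proof (rule sum_bound[where A="{1..<\<rho>}"])
          show "\<forall>k\<in>{..<d}-{0}. norm (t k) \<le> (if k \<in> {1..<\<rho>} then \<bar>a 1\<bar> * \<bar>a P\<bar> else 0)"
          proof
            fix k assume k: "k \<in> {..<d}-{0}"
            show "norm (t k) \<le> (if k \<in> {1..<\<rho>} then \<bar>a 1\<bar> * \<bar>a P\<bar> else 0)"
            proof (cases "k < \<rho>")
              case False then show ?thesis using k zb by (simp add: nt)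
            next
              case True
              have b1: "b k \<le> \<bar>a 1\<bar>" using True k nb anti[of 1 k] by auto
              have b2: "b (k + P) \<le> \<bar>a P\<bar>"
              proof (cases "k + P < \<rho>")
                case True then show ?thesis using nb anti[of P "k+P"] by auto
              next
                case False then show ?thesis using zb[of "k+P"] P rho_lt \<open>k < \<rho>\<close> by auto
              qed
              have "b k * b (k+P) \<le> \<bar>a 1\<bar> * \<bar>a P\<bar>"
                using b1 b2 by (intro mult_mono) (auto simp: b_def)
              then show ?thesis using True k by (simp add: nt sgk)
            qed
          qed
        qed auto
        also have "\<dots> < \<bar>a 0\<bar> * \<bar>a P\<bar>"
        proof -
          have "real (\<rho> - 1) * \<bar>a 1\<bar> < \<bar>a 0\<bar>" using dom kappa by (simp add: of_nat_diff)
          then show ?thesis using apos[OF P(1)] by (simp add: mult.assoc[symmetric])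
        qed
        also have "\<dots> = norm (t 0)" using nt[of 0] sgk[of 0] nb[of 0] nb[OF P(1)] P by simp
        finally show "(\<Sum>k\<in>{..<d}-{0}. norm (t k)) < norm (t 0)" .
      qed (use dpos in auto)
    next
      case False
      define S where "S = nat (- p)"
      have S: "1 \<le> S" "S < \<rho>" "p = - int S" using False hp kappa by (auto simp: S_def)
      have sg1: "sg p k = k - S" if "S \<le> k" "k < d" for k
        using that S by (simp add: sg_def of_nat_diff)
      have sg2: "sg p k = d + k - S" if "k < S" for k
      proof -
        have "(int k - int S) mod int d = (int k - int S + int d) mod int d" by simp
        also have "\<dots> = int k - int S + int d" using that S rho_lt by (intro mod_pos_pos_trivial) auto
        finally show ?thesis using that S rho_lt by (simp add: sg_def)
      qed
      show ?thesis
      proof (rule sum_nonzero_dom[where kz=S])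
        have "(\<Sum>k\<in>{..<d}-{S}. norm (t k)) \<le> real (\<rho> - 1) * (\<bar>a S\<bar> * \<bar>a 1\<bar>)"
        proof (rule sum_bound[where A="{S<..<\<rho>}"])
          show "\<forall>k\<in>{..<d}-{S}. norm (t k) \<le> (if k \<in> {S<..<\<rho>} then \<bar>a S\<bar> * \<bar>a 1\<bar> else 0)"
          proof
            fix k assume k: "k \<in> {..<d}-{S}"
            show "norm (t k) \<le> (if k \<in> {S<..<\<rho>} then \<bar>a S\<bar> * \<bar>a 1\<bar> else 0)"
            proof (cases "k < \<rho>")
              case False then show ?thesis using k zb by (simp add: nt)
            next
              case True
              show ?thesis
              proof (cases "k < S")
                case True
                have "b (sg p k) = 0" using sg2[OF True] zb[of "d + k - S"] S rho_lt True by auto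
                then show ?thesis using True by (simp add: nt)
              next
                case False
                hence kS: "S < k" using k by auto
                have b1: "b k \<le> \<bar>a S\<bar>" using \<open>k < \<rho>\<close> kS nb anti[of S k] by auto
                have b2: "b (k - S) \<le> \<bar>a 1\<bar>" using \<open>k < \<rho>\<close> kS nb anti[of 1 "k - S"] by auto
                have "b k * b (k - S) \<le> \<bar>a S\<bar> * \<bar>a 1\<bar>"
                  using b1 b2 by (intro mult_mono) (auto simp: b_def)
                then show ?thesis using kS \<open>k < \<rho>\<close> k by (simp add: nt sg1)
              qed
            qed
          qed
          show "card {S<..<\<rho>} \<le> \<rho> - 1" by simp
        qed auto
        also have "\<dots> < \<bar>a S\<bar> * \<bar>a 0\<bar>"
        proof -
          have "real (\<rho> - 1) * \<bar>a 1\<bar> < \<bar>a 0\<bar>" using dom kappa by (simp add: of_nat_diff)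
          then show ?thesis using apos[OF S(2)] by (simp add: mult.left_commute)
        qed
        also have "\<dots> = norm (t S)" using nt[of S] sg1[of S] nb[of 0] nb[OF S(2)] S rho_lt by simp
        finally show "(\<Sum>k\<in>{..<d}-{S}. norm (t k)) < norm (t S)" .
      qed (use S rho_lt in auto)
    qed
    show ?thesis using eq ne by simp
  qed
  define f where "f pq = norm (dft d (hadamard (dft d m) (shift d (fst pq) (vconj (dft d m)))) (snd pq))" for pq
  have seteq: "{norm (dft d (hadamard (dft d m) (shift d p (vconj (dft d m)))) q) | p q.
      \<bar>p\<bar> \<le> int \<kappa> - 1 \<and> q < d} = f ` ({- (int \<kappa> - 1)..int \<kappa> - 1} \<times> {..<d})"
  proof (rule set_eqI, rule iffI)
    fix x assume "x \<in> {norm (dft d (hadamard (dft d m) (shift d p (vconj (dft d m)))) q) | p q.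
      \<bar>p\<bar> \<le> int \<kappa> - 1 \<and> q < d}"
    then obtain p q where "x = f (p, q)" "\<bar>p\<bar> \<le> int \<kappa> - 1" "q < d" by (auto simp: f_def)
    then show "x \<in> f ` ({- (int \<kappa> - 1)..int \<kappa> - 1} \<times> {..<d})"
      by (intro image_eqI[of _ _ "(p,q)"]) (auto simp: abs_le_iff)
  next
    fix x assume "x \<in> f ` ({- (int \<kappa> - 1)..int \<kappa> - 1} \<times> {..<d})"
    then obtain p q where "x = f (p, q)" "\<bar>p\<bar> \<le> int \<kappa> - 1" "q < d" by (auto simp: abs_le_iff)
    then show "x \<in> {norm (dft d (hadamard (dft d m) (shift d p (vconj (dft d m)))) q) | p q.
      \<bar>p\<bar> \<le> int \<kappa> - 1 \<and> q < d}" by (auto simp: f_def)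
  qed
  have fin: "finite (f ` ({- (int \<kappa> - 1)..int \<kappa> - 1} \<times> {..<d}))" by simp
  have nem: "f ` ({- (int \<kappa> - 1)..int \<kappa> - 1} \<times> {..<d}) \<noteq> {}" using dpos kappa by auto
  have allpos: "\<forall>x\<in>f ` ({- (int \<kappa> - 1)..int \<kappa> - 1} \<times> {..<d}). 0 < x"
    using key kappa by (auto simp: f_def)
  show ?thesis unfolding mu1_def seteq using Min_gr_iff[OF fin nem] allpos by simp
qed

end
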